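(* Let $m,d,s$ be positive integers and $q$ a prime power with $d/m<q-1$, and let $\mathcal{C}=\mathcal{C}(m,d,s,q)$ be the multiplicity code. Let $A\subseteq\mathbb{F}_q^s$ be an interpolation set for homogeneous polynomials of degree at most $m-1$. Then for every $\boldsymbol{w}_0\in\mathbb{F}_q^s$, the set of coordinates $$R=\{\boldsymbol{w}_0+\lambda\boldsymbol{v}:\ \boldsymbol{v}\in A,\ \lambda\in\mathbb{F}_q\setminus\{0\}\}$$ is a recovering set for the coordinate indexed by $\boldsymbol{w}_0$; that is, for every codeword $\boldsymbol{y}=(y_{\boldsymbol{w}})_{\boldsymbol{w}\in\mathbb{F}_q^s}\in\mathcal{C}$, the symbol $y_{\boldsymbol{w}_0}$ is a function of $(y_{\boldsymbol{w}})_{\boldsymbol{w}\in R}$.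
   Context: For $\boldsymbol{i}=(i_1,\dots,i_s)$ a vector of nonnegative integers, $wt(\boldsymbol{i})=\sum_j i_j$ and $\boldsymbol{x}^{\boldsymbol{i}}=\prod_j x_j^{i_j}$. For $P\in\mathbb{F}_q[x_1,\dots,x_s]$, the $\boldsymbol{i}$-th Hasse derivative $P^{(\boldsymbol{i})}(\boldsymbol{x})$ is the coefficient of $\boldsymbol{z}^{\boldsymbol{i}}$ in $P(\boldsymbol{x}+\boldsymbol{z})\in\mathbb{F}_q[\boldsymbol{x},\boldsymbol{z}]$. Let $\Sigma=\mathbb{F}_q^{\binom{s+m-1}{s}}$ (indexed by the $\boldsymbol{i}$ with $wt(\boldsymbol{i})<m$), and $P^{(<m)}(\boldsymbol{w})=(P^{(\boldsymbol{i})}(\boldsymbol{w}))_{wt(\boldsymbol{i})<m}\in\Sigma$. The multiplicity code $\mathcal{C}(m,d,s,q)$ is the code of length $q^s$ over $\Sigma$ with coordinates indexed by $\mathbb{F}_q^s$, consisting of the words $(P^{(<m)}(\boldsymbol{w}))_{\boldsymbol{w}\in\mathbb{F}_q^s}$ for all $P\in\mathbb{F}_q[x_1,\dots,x_s]$ with $\deg(P)\le d$ (total degree). A polynomial is homogeneous if all its monomials have the same total degree. A set $A\subseteq\mathbb{F}_q^s$ is an interpolation set for homogeneous polynomials of degree at most $m-1$ if for every $0\le j\le m-1$, any two homogeneous polynomials of degree $j$ (allowing the zero polynomial) that agree on every point of $A$ are equal. *)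

theory Defs
  imports Complex_Main
begin

text \<open>Multivariate polynomials over a finite field 'a in the variables indexed by a
finite type 'n (so s = CARD('n)) are represented by their coefficient functions
P :: ('n \<Rightarrow> nat) \<Rightarrow> 'a, mapping an exponent vector i to the coefficient of x^i.
Points of F_q^s are functions 'n \<Rightarrow> 'a.\<close>

definition wt :: "('n::finite \<Rightarrow> nat) \<Rightarrow> nat" where
  "wt i = (\<Sum>j\<in>UNIV. i j)"

text \<open>P has total degree at most d (this also makes its support finite).\<close>
definition deg_le :: "(('n::finite \<Rightarrow> nat) \<Rightarrow> 'a::zero) \<Rightarrow> nat \<Rightarrow> bool" where
  "deg_le P d \<longleftrightarrow> (\<forall>i. P i \<noteq> 0 \<longrightarrow> wt i \<le> d)"

definition homog :: "(('n::finite \<Rightarrow> nat) \<Rightarrow> 'a::zero) \<Rightarrow> nat \<Rightarrow> bool" where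
  "homog P j \<longleftrightarrow> (\<forall>i. P i \<noteq> 0 \<longrightarrow> wt i = j)"

definition eval :: "(('n::finite \<Rightarrow> nat) \<Rightarrow> 'a::comm_ring_1) \<Rightarrow> ('n \<Rightarrow> 'a) \<Rightarrow> 'a" where
  "eval P x = (\<Sum>k\<in>{k. P k \<noteq> 0}. P k * (\<Prod>j\<in>UNIV. x j ^ k j))"

text \<open>i-th Hasse derivative evaluated at x: the coefficient of z^i in P(x+z),
i.e. sum over k of P_k * prod_j binom(k_j, i_j) x_j^(k_j - i_j).\<close>
definition hasse :: "(('n::finite \<Rightarrow> nat) \<Rightarrow> 'a::comm_ring_1) \<Rightarrow> ('n \<Rightarrow> nat) \<Rightarrow> ('n \<Rightarrow> 'a) \<Rightarrow> 'a" where
  "hasse P i x = (\<Sum>k\<in>{k. P k \<noteq> 0}.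
      P k * (\<Prod>j\<in>UNIV. of_nat (k j choose i j) * x j ^ (k j - i j)))"

definition mult_word :: "nat \<Rightarrow> (('n::finite \<Rightarrow> nat) \<Rightarrow> 'a::comm_ring_1)
     \<Rightarrow> ('n \<Rightarrow> 'a) \<Rightarrow> ('n \<Rightarrow> nat) \<Rightarrow> 'a" where
  "mult_word m P = (\<lambda>w i. if wt i < m then hasse P i w else 0)"

text \<open>The multiplicity code C(m,d,s,q), s = CARD('n), q = CARD('a).\<close>
definition mult_code :: "nat \<Rightarrow> nat \<Rightarrow>
     (('n::finite \<Rightarrow> 'a::{finite,field}) \<Rightarrow> ('n \<Rightarrow> nat) \<Rightarrow> 'a) set" where
  "mult_code m d = {mult_word m P | P. deg_le P d}"

definition interp_set_homog :: "nat \<Rightarrow> ('n::finite \<Rightarrow> 'a::{finite,field}) set \<Rightarrow> bool" where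
  "interp_set_homog m A \<longleftrightarrow>
     (\<forall>j<m. \<forall>P Q :: ('n \<Rightarrow> nat) \<Rightarrow> 'a. homog P j \<longrightarrow> homog Q j \<longrightarrow>
        (\<forall>a\<in>A. eval P a = eval Q a) \<longrightarrow> P = Q)"

end

theory Submission imports Defs "HOL-Computational_Algebra.Polynomial" "HOL-Library.FuncSet" begin

definition Sd :: "nat \<Rightarrow> ('n::finite \<Rightarrow> nat) set" where
  "Sd d = {k. wt k \<le> d}"

lemma finite_Sd: "finite (Sd d :: ('n::finite \<Rightarrow> nat) set)"
proof -
  have "Sd d \<subseteq> PiE (UNIV::'n set) (\<lambda>_. {..d})"
  proof
    fix k :: "'n \<Rightarrow> nat" assume "k \<in> Sd d"
    then have "wt k \<le> d" by (simp add: Sd_def)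
    moreover have "k j \<le> wt k" for j unfolding wt_def by (rule member_le_sum) auto
    ultimately show "k \<in> PiE UNIV (\<lambda>_. {..d})" by (auto simp: PiE_UNIV_domain intro: le_trans)
  qed
  thus ?thesis by (rule finite_subset) (auto intro: finite_PiE)
qed

lemma hasse_S: assumes "deg_le P d"
  shows "hasse P i w = (\<Sum>k\<in>Sd d. P k * (\<Prod>j\<in>UNIV. of_nat (k j choose i j) * w j ^ (k j - i j)))"
  unfolding hasse_def
  by (rule sum.mono_neutral_left) (use assms finite_Sd in \<open>auto simp: deg_le_def Sd_def\<close>)

lemma eval_S: assumes "finite F" "{k. P k \<noteq> 0} \<subseteq> F"
  shows "eval P x = (\<Sum>k\<in>F. P k * (\<Prod>j\<in>UNIV. x j ^ k j))"
  unfolding eval_def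
  by (rule sum.mono_neutral_left) (use assms in auto)

lemma hasse_zero: assumes "deg_le P d" "d < wt i" shows "hasse P i w = 0"
  unfolding hasse_def
proof (rule sum.neutral, rule ballI)
  fix k assume "k \<in> {k. P k \<noteq> 0}"
  then have "wt k \<le> d" using assms(1) by (auto simp: deg_le_def)
  have "\<exists>j. k j < i j"
  proof (rule ccontr)
    assume "\<not> ?thesis"
    then have "wt i \<le> wt k" unfolding wt_def by (intro sum_mono) (auto simp: not_less)
    with \<open>wt k \<le> d\<close> assms(2) show False by simp
  qed
  then obtain j where "k j < i j" by blast
  then have "(\<Prod>j\<in>UNIV. of_nat (k j choose i j) * w j ^ (k j - i j)) = 0"
    by (intro prod_zero) (auto intro!: exI[of _ j] simp: binomial_eq_0)
  thus "P k * (\<Prod>j\<in>UNIV. of_nat (k j choose i j) * w j ^ (k j - i j)) = 0" by simp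
qed

lemma const_add: "[:a + b:] = [:a:] + [:b:]" by simp
lemma const_mult: "[:a * b:] = [:a:] * [:b:]" by (simp add: mult.commute)
lemma const_pow: "[:a ^ n:] = [:a:] ^ n" by (induction n) (auto simp: const_mult)
lemma const_sum: "[:\<Sum>x\<in>A. f x:] = (\<Sum>x\<in>A. [:f x:])"
proof (induction A rule: infinite_finite_induct)
  case (insert x F)
  then show ?case by (metis const_add sum.insert)
qed auto
lemma const_prod: "[:\<Prod>x\<in>A. f x:] = (\<Prod>x\<in>A. [:f x:])"
  by (induction A rule: infinite_finite_induct) (auto simp: const_mult)

lemma binom_prod:
  fixes w z :: "'n::finite \<Rightarrow> 'b::comm_ring_1"
  assumes "k \<in> Sd d"
  shows "(\<Prod>j\<in>UNIV. (w j + z j) ^ k j) =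
    (\<Sum>i\<in>Sd d. (\<Prod>j\<in>UNIV. of_nat (k j choose i j) * w j ^ (k j - i j)) * (\<Prod>j\<in>UNIV. z j ^ i j))"
proof -
  have "(\<Prod>j\<in>UNIV. (w j + z j) ^ k j) =
     (\<Prod>j\<in>UNIV. \<Sum>l\<le>k j. of_nat (k j choose l) * w j ^ (k j - l) * z j ^ l)"
    by (intro prod.cong refl) (subst add.commute, subst binomial_ring, simp add: mult_ac)
  also have "\<dots> = (\<Sum>g\<in>PiE UNIV (\<lambda>j. {..k j}). \<Prod>j\<in>UNIV. of_nat (k j choose g j) * w j ^ (k j - g j) * z j ^ g j)"
    by (rule prod_sum_PiE) auto
  also have "\<dots> = (\<Sum>g\<in>Sd d. \<Prod>j\<in>UNIV. of_nat (k j choose g j) * w j ^ (k j - g j) * z j ^ g j)"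
  proof (rule sum.mono_neutral_left)
    show "finite (Sd d :: ('n \<Rightarrow> nat) set)" by (rule finite_Sd)
    show "PiE UNIV (\<lambda>j. {..k j}) \<subseteq> Sd d"
    proof
      fix g assume "g \<in> PiE (UNIV::'n set) (\<lambda>j. {..k j})"
      then have "wt g \<le> wt k" unfolding wt_def by (intro sum_mono) (auto simp: PiE_UNIV_domain)
      with assms show "g \<in> Sd d" by (auto simp: Sd_def)
    qed
    show "\<forall>g\<in>Sd d - PiE UNIV (\<lambda>j. {..k j}). (\<Prod>j\<in>UNIV. of_nat (k j choose g j) * w j ^ (k j - g j) * z j ^ g j) = 0"
    proof
      fix g assume "g \<in> Sd d - PiE (UNIV::'n set) (\<lambda>j. {..k j})"
      then obtain j where "k j < g j" by (auto simp: PiE_UNIV_domain not_le) (meson not_le)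
      then show "(\<Prod>j\<in>UNIV. of_nat (k j choose g j) * w j ^ (k j - g j) * z j ^ g j) = 0"
        by (intro prod_zero) (auto intro!: exI[of _ j] simp: binomial_eq_0)
    qed
  qed
  also have "\<dots> = (\<Sum>i\<in>Sd d. (\<Prod>j\<in>UNIV. of_nat (k j choose i j) * w j ^ (k j - i j)) * (\<Prod>j\<in>UNIV. z j ^ i j))"
    by (simp add: prod.distrib)
  finally show ?thesis .
qed

lemma taylor:
  fixes w z :: "'n::finite \<Rightarrow> 'b::comm_ring_1" and P :: "('n \<Rightarrow> nat) \<Rightarrow> 'b"
  shows "(\<Sum>k\<in>Sd d. P k * (\<Prod>j\<in>UNIV. (w j + z j) ^ k j)) =
    (\<Sum>i\<in>Sd d. (\<Sum>k\<in>Sd d. P k * (\<Prod>j\<in>UNIV. of_nat (k j choose i j) * w j ^ (k j - i j))) * (\<Prod>j\<in>UNIV. z j ^ i j))"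
proof -
  have "(\<Sum>k\<in>Sd d. P k * (\<Prod>j\<in>UNIV. (w j + z j) ^ k j)) =
     (\<Sum>k\<in>Sd d. \<Sum>i\<in>Sd d. P k * ((\<Prod>j\<in>UNIV. of_nat (k j choose i j) * w j ^ (k j - i j)) * (\<Prod>j\<in>UNIV. z j ^ i j)))"
    by (intro sum.cong refl) (simp add: binom_prod sum_distrib_left)
  also have "\<dots> = (\<Sum>i\<in>Sd d. \<Sum>k\<in>Sd d. P k * ((\<Prod>j\<in>UNIV. of_nat (k j choose i j) * w j ^ (k j - i j)) * (\<Prod>j\<in>UNIV. z j ^ i j)))"
    by (rule sum.swap)
  finally show ?thesis by (simp add: sum_distrib_right mult.assoc)
qed
lemma roots_deg:
  fixes p :: "'a::field poly"
  assumes "finite B" "p \<noteq> 0" "\<forall>c\<in>B. [:-c,1:]^m dvd p"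
  shows "m * card B \<le> degree p"
  using assms
proof (induction B arbitrary: p rule: finite_induct)
  case empty then show ?case by simp
next
  case (insert b B)
  then obtain r where r: "p = [:-b,1:]^m * r" by (meson dvd_def insertI1)
  with insert have r0: "r \<noteq> 0" by auto
  have "\<forall>c\<in>B. [:-c,1:]^m dvd r"
  proof
    fix c assume c: "c \<in> B"
    then have "c \<noteq> b" using insert by auto
    have "m \<le> order c p" using insert c order_divides by blast
    also have "order c p = order c ([:-b,1:]^m) + order c r"
      using r insert by (simp add: order_mult)
    also have "order c ([:-b,1:]^m) = 0"
      using \<open>c \<noteq> b\<close> by (intro order_0I) simp
    finally show "[:-c,1:]^m dvd r" using order_divides by auto
  qed
  with insert.IH r0 have "m * card B \<le> degree r" by blast
  moreover have "degree p = m + degree r"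
    using r r0 by (simp add: degree_mult_eq degree_linear_power)
  ultimately show ?case using insert by simp
qed
lemma lin_monom: "[:0, a:] = monom a 1"
  by (simp add: monom_Suc monom_0)

lemma prod_monom: "(\<Prod>x\<in>A. monom (f x) (g x)) = monom (\<Prod>x\<in>A. f x) (\<Sum>x\<in>A. g x)"
  by (induction A rule: infinite_finite_induct) (auto simp: mult_monom)

lemma key:
  fixes P :: "('n::finite \<Rightarrow> nat) \<Rightarrow> 'a::{finite,field}" and w0 v :: "'n \<Rightarrow> 'a"
  assumes deg: "deg_le P d" and dlt: "d < m * (card (UNIV :: 'a set) - 1)"
    and van: "\<And>c i. c \<noteq> 0 \<Longrightarrow> wt i < m \<Longrightarrow> hasse P i (\<lambda>j. w0 j + c * v j) = 0"
  shows "eval (\<lambda>i. if wt i = e then hasse P i w0 else 0) v = 0"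
proof -
  define g where "g = (\<Sum>k\<in>Sd d. [:P k:] * (\<Prod>j\<in>UNIV. [:w0 j, v j:] ^ k j))"
  have tay: "g = (\<Sum>i\<in>Sd d. [:hasse P i (\<lambda>j. w0 j + c * v j):] * (\<Prod>j\<in>UNIV. [:-c*v j, v j:] ^ i j))" for c
  proof -
    have "g = (\<Sum>k\<in>Sd d. [:P k:] * (\<Prod>j\<in>UNIV. ([:w0 j + c*v j:] + [:-c*v j, v j:]) ^ k j))"
      unfolding g_def by simp
    also have "\<dots> = (\<Sum>i\<in>Sd d. (\<Sum>k\<in>Sd d. [:P k:] * (\<Prod>j\<in>UNIV. of_nat (k j choose i j) * [:w0 j + c*v j:] ^ (k j - i j))) * (\<Prod>j\<in>UNIV. [:-c*v j, v j:] ^ i j))"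
      by (rule taylor)
    also have "\<dots> = (\<Sum>i\<in>Sd d. [:hasse P i (\<lambda>j. w0 j + c * v j):] * (\<Prod>j\<in>UNIV. [:-c*v j, v j:] ^ i j))"
      by (intro sum.cong refl arg_cong2[where f=times])
         (simp add: hasse_S[OF deg] const_sum const_prod const_mult const_pow of_nat_poly)
    finally show ?thesis .
  qed
  have degg: "degree g \<le> d"
    unfolding g_def
  proof (rule degree_sum_le[OF finite_Sd])
    fix k :: "'n \<Rightarrow> nat" assume k: "k \<in> Sd d"
    have "degree (\<Prod>j\<in>UNIV. [:w0 j, v j:] ^ k j) \<le> (\<Sum>j\<in>UNIV. degree ([:w0 j, v j:] ^ k j))"
      using degree_prod_sum_le[of UNIV "\<lambda>j. [:w0 j, v j:] ^ k j"] by (simp add: o_def)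
    also have "\<dots> \<le> (\<Sum>j\<in>UNIV. k j)"
    proof (rule sum_mono)
      fix j
      have "degree ([:w0 j, v j:] ^ k j) \<le> degree [:w0 j, v j:] * k j" by (rule degree_power_le)
      also have "\<dots> \<le> 1 * k j" by (intro mult_right_mono) auto
      finally show "degree ([:w0 j, v j:] ^ k j) \<le> k j" by simp
    qed
    also have "\<dots> \<le> d" using k by (simp add: Sd_def wt_def)
    finally show "degree ([:P k:] * (\<Prod>j\<in>UNIV. [:w0 j, v j:] ^ k j)) \<le> d"
      using degree_smult_le[of "P k" "\<Prod>j\<in>UNIV. [:w0 j, v j:] ^ k j"] by simp
  qed
  have g0: "g = 0"
  proof (rule ccontr)
    assume gnz: "g \<noteq> 0"
    have "\<forall>c\<in>UNIV - {0}. [:-c,1:]^m dvd g"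
    proof
      fix c :: 'a assume "c \<in> UNIV - {0}"
      then have c: "c \<noteq> 0" by simp
      show "[:-c,1:]^m dvd g"
        unfolding tay[of c]
      proof (rule dvd_sum)
        fix i :: "'n \<Rightarrow> nat" assume "i \<in> Sd d"
        show "[:-c,1:]^m dvd [:hasse P i (\<lambda>j. w0 j + c * v j):] * (\<Prod>j\<in>UNIV. [:-c*v j, v j:] ^ i j)"
        proof (cases "wt i < m")
          case True then show ?thesis using van[OF c True] by simp
        next
          case False
          have "(\<Prod>j\<in>UNIV. [:-c*v j, v j:] ^ i j) = (\<Prod>j\<in>UNIV. ([:v j:] * [:-c,1:]) ^ i j)"
            by (intro prod.cong refl) (simp add: mult.commute)
          also have "\<dots> = (\<Prod>j\<in>UNIV. [:v j:] ^ i j) * [:-c,1:] ^ wt i"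
            by (simp only: power_mult_distrib prod.distrib power_sum wt_def)
          finally have eq: "(\<Prod>j\<in>UNIV. [:-c*v j, v j:] ^ i j) = (\<Prod>j\<in>UNIV. [:v j:] ^ i j) * [:-c,1:] ^ wt i" .
          have "[:-c,1:]^m dvd [:-c,1:] ^ wt i" using False by (intro le_imp_power_dvd) simp
          then have "[:-c,1:]^m dvd (\<Prod>j\<in>UNIV. [:-c*v j, v j:] ^ i j)"
            unfolding eq by (rule dvd_mult)
          then show ?thesis by (rule dvd_mult)
        qed
      qed
    qed
    then have "m * card (UNIV - {0::'a}) \<le> degree g" by (intro roots_deg gnz) auto
    also have "card (UNIV - {0::'a}) = card (UNIV :: 'a set) - 1" by (simp add: card_Diff_singleton)
    finally show False using degg dlt by simp
  qed
  have e1: "(\<lambda>j. w0 j + 0 * v j) = w0" by auto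
  have e2: "\<And>j. [:- 0 * v j, v j:] = [:0, v j:]" by simp
  have "g = (\<Sum>i\<in>Sd d. [:hasse P i w0:] * (\<Prod>j\<in>UNIV. [:0, v j:] ^ i j))"
    using tay[of 0] by (simp only: e1 e2)
  also have "\<dots> = (\<Sum>i\<in>Sd d. monom (hasse P i w0 * (\<Prod>j\<in>UNIV. v j ^ i j)) (wt i))"
  proof (intro sum.cong refl)
    fix i :: "'n \<Rightarrow> nat"
    have "(\<Prod>j\<in>UNIV. [:0, v j:] ^ i j) = (\<Prod>j\<in>UNIV. monom (v j ^ i j) (i j))"
      by (simp only: lin_monom monom_power mult_1)
    also have "\<dots> = monom (\<Prod>j\<in>UNIV. v j ^ i j) (wt i)"
      by (simp only: prod_monom wt_def)
    finally show "[:hasse P i w0:] * (\<Prod>j\<in>UNIV. [:0, v j:] ^ i j) = monom (hasse P i w0 * (\<Prod>j\<in>UNIV. v j ^ i j)) (wt i)"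
      by (simp add: smult_monom)
  qed
  finally have "coeff g e = (\<Sum>i\<in>Sd d. if wt i = e then hasse P i w0 * (\<Prod>j\<in>UNIV. v j ^ i j) else 0)"
    by (simp add: coeff_sum)
  also have "\<dots> = eval (\<lambda>i. if wt i = e then hasse P i w0 else 0) v"
  proof -
    have "{k. (if wt k = e then hasse P k w0 else 0) \<noteq> 0} \<subseteq> Sd d"
      using hasse_zero[OF deg] by (auto simp: Sd_def not_le[symmetric])
    show ?thesis
      by (subst eval_S[OF finite_Sd \<open>_ \<subseteq> Sd d\<close>], rule sum.cong[OF refl], simp)
  qed
  finally show ?thesis using g0 by simp
qed
theorem theorem1:
  fixes m d :: nat and A :: "('n::finite \<Rightarrow> 'a::{finite,field}) set" and w0 :: "'n \<Rightarrow> 'a"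
  assumes "m > 0" and "d > 0"
    and "real d / real m < real (card (UNIV :: 'a set)) - 1"
    and "interp_set_homog m A"
  defines "R \<equiv> {(\<lambda>j. w0 j + c * v j) | v c. v \<in> A \<and> c \<noteq> 0}"
  shows "\<exists>f. \<forall>y\<in>mult_code m d. y w0 = f (\<lambda>w. if w \<in> R then y w else (\<lambda>_. 0))"
proof -
  define C where "C = (mult_code m d :: (('n \<Rightarrow> 'a) \<Rightarrow> ('n \<Rightarrow> nat) \<Rightarrow> 'a) set)"
  define rs where "rs = (\<lambda>y::('n \<Rightarrow> 'a) \<Rightarrow> ('n \<Rightarrow> nat) \<Rightarrow> 'a. (\<lambda>w. if w \<in> R then y w else (\<lambda>_. 0)))"
  have q1: "card (UNIV :: 'a set) \<ge> 1" by (simp add: Suc_leI finite_UNIV_card_ge_0)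
  have dlt: "d < m * (card (UNIV :: 'a set) - 1)"
  proof -
    have "real d < real m * (real (card (UNIV :: 'a set)) - 1)"
      using assms(1,3) by (simp add: divide_less_eq mult.commute)
    also have "\<dots> = real (m * (card (UNIV :: 'a set) - 1))" using q1 by (simp add: of_nat_diff)
    finally show ?thesis by linarith
  qed
  have uniq: "y1 w0 = y2 w0" if y1: "y1 \<in> C" and y2: "y2 \<in> C" and r: "rs y1 = rs y2" for y1 y2
  proof -
    obtain P where P: "deg_le P d" "y1 = mult_word m P" using y1 by (auto simp: C_def mult_code_def)
    obtain Q where Q: "deg_le Q d" "y2 = mult_word m Q" using y2 by (auto simp: C_def mult_code_def)
    define D where "D = (\<lambda>k. P k - Q k)"
    have degD: "deg_le D d" using P(1) Q(1) unfolding deg_le_def D_def by (metis diff_self)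
    have hD: "hasse D i w = hasse P i w - hasse Q i w" for i w
      unfolding hasse_S[OF degD] hasse_S[OF P(1)] hasse_S[OF Q(1)]
      by (simp add: D_def left_diff_distrib sum_subtractf)
    have main: "hasse D i w0 = 0" if "wt i < m" for i
    proof -
      define H where "H = (\<lambda>i'. if wt i' = wt i then hasse D i' w0 else 0)"
      have "\<forall>a\<in>A. eval H a = eval (\<lambda>_. 0 :: 'a) a"
      proof
        fix v assume v: "v \<in> A"
        have van: "hasse D i' (\<lambda>j. w0 j + c * v j) = 0" if c: "c \<noteq> 0" and i': "wt i' < m" for c i'
        proof -
          have "(\<lambda>j. w0 j + c * v j) \<in> R" unfolding R_def using v c by blast
          then have "y1 (\<lambda>j. w0 j + c * v j) = y2 (\<lambda>j. w0 j + c * v j)"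
            using fun_cong[OF r, of "\<lambda>j. w0 j + c * v j"] by (simp add: rs_def)
          then have "hasse P i' (\<lambda>j. w0 j + c * v j) = hasse Q i' (\<lambda>j. w0 j + c * v j)"
            using fun_cong[of _ _ i'] i' by (fastforce simp: P(2) Q(2) mult_word_def)
          then show ?thesis by (simp add: hD)
        qed
        have "eval H v = 0" unfolding H_def by (rule key[OF degD dlt van])
        moreover have "eval (\<lambda>_. 0 :: 'a) v = 0" by (simp add: eval_def)
        ultimately show "eval H v = eval (\<lambda>_. 0 :: 'a) v" by simp
      qed
      moreover have "homog H (wt i)" by (simp add: homog_def H_def)
      moreover have "homog (\<lambda>_. 0 :: 'a) (wt i)" by (simp add: homog_def)
      ultimately have "H = (\<lambda>_. 0)" using assms(4) that unfolding interp_set_homog_def by blast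
      then have "H i = 0" by simp
      then show ?thesis by (simp add: H_def)
    qed
    show ?thesis
    proof
      fix i
      show "y1 w0 i = y2 w0 i"
      proof (cases "wt i < m")
        case True
        then have "hasse P i w0 = hasse Q i w0" using main[OF True] by (simp add: hD)
        then show ?thesis by (simp add: P(2) Q(2) mult_word_def)
      qed (simp add: P(2) Q(2) mult_word_def)
    qed
  qed
  define f where "f = (\<lambda>r. (SOME y. y \<in> C \<and> rs y = r) w0)"
  have "\<forall>y\<in>C. y w0 = f (rs y)"
  proof
    fix y assume y: "y \<in> C"
    then have "\<exists>y'. y' \<in> C \<and> rs y' = rs y" by blast
    then have "(SOME y'. y' \<in> C \<and> rs y' = rs y) \<in> C \<and> rs (SOME y'. y' \<in> C \<and> rs y' = rs y) = rs y"
      by (rule someI_ex)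
    then show "y w0 = f (rs y)" unfolding f_def using uniq[OF y] by simp
  qed
  then show ?thesis unfolding C_def rs_def by blast
qed

end
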